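(* Let $P \subseteq \mathbb{R}^7$ be an associative $3$-plane. Then the $3$-dimensional subspace $\Psi(P) = \mathrm{Span}\{\Psi_{uv} : u,v \in P\}$ of $\Lambda^2(\mathbb{R}^7)$ is a Lie subalgebra isomorphic to $\mathfrak{so}(3)$.
   Context: Equip $\mathbb{R}^7$ with its standard inner product, orientation and basis. Let $\varphi = e_{123} - e_{167} - e_{527} - e_{563} - e_{415} - e_{426} - e_{437}$ ($e_{ijk} = e_i\wedge e_j\wedge e_k$), $\psi = \star\varphi = e_{4567} - e_{4523} - e_{4163} - e_{4127} - e_{2637} - e_{1537} - e_{1526}$, and define $\times$ by $\langle u \times v, w \rangle = \varphi(u,v,w)$. A $3$-dimensional subspace is associative if closed under $\times$. $\Psi_{uv}$ is the skew bilinear form $(x,y)\mapsto \psi(u,v,x,y)$. Skew bilinear forms $X$ are identified with skew-adjoint operators via $X(x,y) = \langle X(x), y \rangle$, so $\Lambda^2(\mathbb{R}^7) = \mathfrak{so}(7)$ with bracket the commutator. *)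

theory Defs
  imports "HOL-Analysis.Analysis"
begin

text \<open>R^7 is modelled as real^7. The standard basis vector e_k (k = 1..7) is
  the axis vector at index (k - 1) of the numeral type 7 (whose elements are 0..6).\<close>

definition idx7 :: "nat \<Rightarrow> 7" where
  "idx7 k = of_nat (k - 1)"

definition ebasis :: "nat \<Rightarrow> real^7" where
  "ebasis k = axis (idx7 k) 1"

definition coord :: "nat \<Rightarrow> real^7 \<Rightarrow> real" where
  "coord k x = x $ idx7 k"

definition det3 :: "real \<Rightarrow> real \<Rightarrow> real \<Rightarrow> real \<Rightarrow> real \<Rightarrow> real \<Rightarrow> real \<Rightarrow> real \<Rightarrow> real \<Rightarrow> real" where
  "det3 a b c d e f g h i = a * (e * i - f * h) - b * (d * i - f * g) + c * (d * h - e * g)"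

definition wedge3 :: "nat \<Rightarrow> nat \<Rightarrow> nat \<Rightarrow> real^7 \<Rightarrow> real^7 \<Rightarrow> real^7 \<Rightarrow> real" where
  "wedge3 i j k u v w =
     det3 (coord i u) (coord i v) (coord i w)
          (coord j u) (coord j v) (coord j w)
          (coord k u) (coord k v) (coord k w)"

text \<open>(e_i \<and> e_j \<and> e_k \<and> e_l)(u,v,x,y): 4x4 determinant, Laplace expansion along row i.\<close>
definition wedge4 :: "nat \<Rightarrow> nat \<Rightarrow> nat \<Rightarrow> nat \<Rightarrow> real^7 \<Rightarrow> real^7 \<Rightarrow> real^7 \<Rightarrow> real^7 \<Rightarrow> real" where
  "wedge4 i j k l u v x y =
      coord i u * wedge3 j k l v x y - coord i v * wedge3 j k l u x y
    + coord i x * wedge3 j k l u v y - coord i y * wedge3 j k l u v x"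

definition phi7 :: "real^7 \<Rightarrow> real^7 \<Rightarrow> real^7 \<Rightarrow> real" where
  "phi7 u v w = wedge3 1 2 3 u v w - wedge3 1 6 7 u v w - wedge3 5 2 7 u v w
     - wedge3 5 6 3 u v w - wedge3 4 1 5 u v w - wedge3 4 2 6 u v w - wedge3 4 3 7 u v w"

definition psi7 :: "real^7 \<Rightarrow> real^7 \<Rightarrow> real^7 \<Rightarrow> real^7 \<Rightarrow> real" where
  "psi7 u v x y = wedge4 4 5 6 7 u v x y - wedge4 4 5 2 3 u v x y - wedge4 4 1 6 3 u v x y
     - wedge4 4 1 2 7 u v x y - wedge4 2 6 3 7 u v x y - wedge4 1 5 3 7 u v x y
     - wedge4 1 5 2 6 u v x y"

definition cross7 :: "real^7 \<Rightarrow> real^7 \<Rightarrow> real^7" where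
  "cross7 u v = (\<chi> i. phi7 u v (axis i 1))"

definition associative_plane :: "(real^7) set \<Rightarrow> bool" where
  "associative_plane P \<longleftrightarrow> subspace P \<and> dim P = 3 \<and> (\<forall>u\<in>P. \<forall>v\<in>P. cross7 u v \<in> P)"

text \<open>Psi_{uv} as a skew-adjoint operator, represented by its matrix M (acting by M *v x):
  \<langle>M x, y\<rangle> = psi(u,v,x,y), i.e. M $ j $ i = psi(u,v,e_i,e_j).\<close>
definition PsiM :: "real^7 \<Rightarrow> real^7 \<Rightarrow> real^7^7" where
  "PsiM u v = (\<chi> j i. psi7 u v (axis i 1) (axis j 1))"

definition lie_bracket :: "real^'n^'n \<Rightarrow> real^'n^'n \<Rightarrow> real^'n^'n" where
  "lie_bracket A B = A ** B - B ** A"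

definition so_mat :: "(real^'n^'n) set" where
  "so_mat = {A. transpose A = - A}"

end

theory Submission
  imports Defs
begin
lemma exhaust_7:
  fixes x :: 7
  shows "x = 0 \<or> x = 1 \<or> x = 2 \<or> x = 3 \<or> x = 4 \<or> x = 5 \<or> x = 6"
proof (induct x)
  case (of_int z)
  then have "z = 0 \<or> z = 1 \<or> z = 2 \<or> z = 3 \<or> z = 4 \<or> z = 5 \<or> z = 6" by fastforce
  then show ?case by auto
qed
lemma forall_7: "(\<forall>i::7. P i) \<longleftrightarrow> P 0 \<and> P 1 \<and> P 2 \<and> P 3 \<and> P 4 \<and> P 5 \<and> P 6"
  by (metis exhaust_7)
lemma UNIV_7: "UNIV = {0,1,2,3,4,5,6::7}"
  using exhaust_7 by auto
lemma sum_7: "sum f (UNIV::7 set) = f 0 + f 1 + f 2 + f 3 + f 4 + f 5 + f 6"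
  unfolding UNIV_7 by (simp add: ac_simps)
lemma coord_simps[simp]: "coord 1 x = x$0" "coord (Suc 0) x = x$0" "coord 2 x = x$1" "coord 3 x = x$2" "coord 4 x = x$3"
  "coord 5 x = x$4" "coord 6 x = x$5" "coord 7 x = x$6"
  by (simp_all add: coord_def idx7_def)
lemma cross7_nth:
  "cross7 u v $ 0 = u $ 1* v $ 2 - u $ 2* v $ 1 - u $ 5* v $ 6 + u $ 6* v $ 5 + u $ 3* v $ 4 - u $ 4* v $ 3"
  "cross7 u v $ 1 = - u $ 0* v $ 2 + u $ 2* v $ 0 + u $ 4* v $ 6 - u $ 6* v $ 4 + u $ 3* v $ 5 - u $ 5* v $ 3"
  "cross7 u v $ 2 = u $ 0* v $ 1 - u $ 1* v $ 0 - u $ 4* v $ 5 + u $ 5* v $ 4 + u $ 3* v $ 6 - u $ 6* v $ 3"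
  "cross7 u v $ 3 = - u $ 0* v $ 4 + u $ 4* v $ 0 - u $ 1* v $ 5 + u $ 5* v $ 1 - u $ 2* v $ 6 + u $ 6* v $ 2"
  "cross7 u v $ 4 = - u $ 1* v $ 6 + u $ 6* v $ 1 - u $ 5* v $ 2 + u $ 2* v $ 5 - u $ 3* v $ 0 + u $ 0* v $ 3"
  "cross7 u v $ 5 = u $ 0* v $ 6 - u $ 6* v $ 0 + u $ 4* v $ 2 - u $ 2* v $ 4 - u $ 3* v $ 1 + u $ 1* v $ 3"
  "cross7 u v $ 6 = - u $ 0* v $ 5 + u $ 5* v $ 0 - u $ 4* v $ 1 + u $ 1* v $ 4 - u $ 3* v $ 2 + u $ 2* v $ 3"
  by (simp_all add: cross7_def phi7_def wedge3_def det3_def axis_def algebra_simps)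
lemma inner7: "inner (x::real^7) y = x$0*y$0 + x$1*y$1 + x$2*y$2 + x$3*y$3 + x$4*y$4 + x$5*y$5 + x$6*y$6"
  by (simp add: inner_vec_def sum_7)
lemma assoc7: "cross7 a (cross7 b c) + cross7 (cross7 a b) c = (2 * inner a c) *\<^sub>R b - inner b c *\<^sub>R a - inner a b *\<^sub>R c"
  by (simp add: vec_eq_iff forall_7 cross7_nth inner7 algebra_simps)
lemma phi_inner: "phi7 u v w = inner (cross7 u v) w"
  by (simp add: inner7 cross7_nth phi7_def wedge3_def det3_def algebra_simps)
lemma psi_formula: "PsiM a b *v x = cross7 x (cross7 a b) + inner a x *\<^sub>R b - inner b x *\<^sub>R a"
  by (simp add: vec_eq_iff forall_7 matrix_vector_mult_def PsiM_def sum_7 psi7_def wedge4_def wedge3_def det3_def axis_def cross7_nth inner7 algebra_simps)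
lemma cross_add_left: "cross7 (a + b) c = cross7 a c + cross7 b c"
  and cross_add_right: "cross7 a (b + c) = cross7 a b + cross7 a c"
  and cross_diff_left: "cross7 (a - b) c = cross7 a c - cross7 b c"
  and cross_diff_right: "cross7 a (b - c) = cross7 a b - cross7 a c"
  and cross_scale_left: "cross7 (r *\<^sub>R a) b = r *\<^sub>R cross7 a b"
  and cross_scale_right: "cross7 a (r *\<^sub>R b) = r *\<^sub>R cross7 a b"
  and cross_neg_left: "cross7 (- a) b = - cross7 a b"
  and cross_neg_right: "cross7 a (- b) = - cross7 a b"
  and cross_zero_right: "cross7 b 0 = 0"
  and cross_zero_left: "cross7 0 b = 0"
  and cross_self: "cross7 a a = 0"
  by (simp_all add: vec_eq_iff forall_7 cross7_nth algebra_simps)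
lemma cross_skew: "cross7 b a = - cross7 a b"
  by (simp add: vec_eq_iff forall_7 cross7_nth algebra_simps)
lemma inner_cross_cyc: "inner (cross7 a b) c = inner a (cross7 b c)"
  by (simp add: inner7 cross7_nth algebra_simps)
lemma inner_cross_l: "inner (cross7 a b) a = 0" and inner_cross_r: "inner (cross7 a b) b = 0"
  by (simp_all add: inner7 cross7_nth algebra_simps)
lemma lagr: "inner (cross7 p q) (cross7 p r) = inner p p * inner q r - inner p q * inner p r"
  by (simp add: inner7 cross7_nth algebra_simps)
lemma assoc7': "cross7 (cross7 a b) c = (2 * inner a c) *\<^sub>R b - inner b c *\<^sub>R a - inner a b *\<^sub>R c - cross7 a (cross7 b c)"
  using assoc7[of a b c] by (simp add: algebra_simps)
lemma psi_alt: "psi7 u v x y = - psi7 u v y x"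
  by (simp add: psi7_def wedge4_def wedge3_def det3_def algebra_simps)
lemma PsiM_transpose: "transpose (PsiM u v) = - PsiM u v"
  unfolding vec_eq_iff transpose_def PsiM_def by (simp, subst psi_alt, simp)
lemma neg_mv: "(- A) *v x = - (A *v (x::real^'n))"
  by (simp add: vec_eq_iff matrix_vector_mult_def sum_negf)
lemma zero_mv: "(0::real^'n^'m) *v x = 0"
  by (simp add: vec_eq_iff matrix_vector_mult_def)
lemma PsiM_add_left: "PsiM (a + b) c = PsiM a c + PsiM b c"
  by (simp add: matrix_eq matrix_vector_mult_add_rdistrib psi_formula cross_add_left cross_add_right inner_add_left algebra_simps)
lemma PsiM_scale_left: "PsiM (r *\<^sub>R a) c = r *\<^sub>R PsiM a c"
  by (simp add: matrix_eq scaleR_matrix_vector_assoc[symmetric] psi_formula cross_scale_left cross_scale_right algebra_simps)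
lemma PsiM_skew: "PsiM b a = - PsiM a b"
  by (simp add: matrix_eq neg_mv psi_formula cross_skew[of b a] cross_neg_right algebra_simps)
lemma PsiM_self: "PsiM a a = 0"
  by (simp add: matrix_eq zero_mv psi_formula cross_self cross_zero_right)
lemma PsiM_add_right: "PsiM c (a + b) = PsiM c a + PsiM c b"
  by (metis PsiM_skew PsiM_add_left minus_add_distrib)
lemma PsiM_scale_right: "PsiM c (r *\<^sub>R a) = r *\<^sub>R PsiM c a"
  by (metis PsiM_skew PsiM_scale_left scaleR_minus_right)
lemma PsiM_zero_left: "PsiM 0 a = 0"
  using PsiM_scale_left[of 0 0 a] by simp
lemma PsiM_zero_right: "PsiM a 0 = 0"
  using PsiM_scale_right[of a 0 0] by simp

lemma lie_comb:
  fixes X Y Z :: "real^'n^'n"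
  shows "lie_bracket (x1 *\<^sub>R X + x2 *\<^sub>R Y + x3 *\<^sub>R Z) (y1 *\<^sub>R X + y2 *\<^sub>R Y + y3 *\<^sub>R Z)
    = (x2*y3 - x3*y2) *\<^sub>R lie_bracket Y Z + (x3*y1 - x1*y3) *\<^sub>R lie_bracket Z X + (x1*y2 - x2*y1) *\<^sub>R lie_bracket X Y"
  unfolding lie_bracket_def matrix_eq
  by (simp add: matrix_vector_mult_add_rdistrib matrix_vector_mult_diff_rdistrib matrix_vector_mul_assoc[symmetric]
      scaleR_matrix_vector_assoc[symmetric] matrix_vector_right_distrib matrix_scaleR_vector_ac algebra_simps)

lemma bracket_rel:
  assumes aa: "inner a a = 1" and bb: "inner b b = 1" and cc: "inner c c = 1"
    and ab: "inner a b = 0" and bc: "inner b c = 0" and ca: "inner c a = 0"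
    and xab: "cross7 a b = c" and xbc: "cross7 b c = a" and xca: "cross7 c a = b"
  shows "lie_bracket (PsiM b c) (PsiM c a) = 2 *\<^sub>R PsiM a b"
proof -
  have ba: "inner b a = 0" "inner c b = 0" "inner a c = 0" using ab bc ca by (simp_all add: inner_commute)
  have xba: "cross7 b a = - c" "cross7 c b = -a" "cross7 a c = -b"
    using xab xbc xca cross_skew by metis+
  have "lie_bracket (PsiM b c) (PsiM c a) *v x = (2 *\<^sub>R PsiM a b) *v x" for x
  proof -
    have y: "PsiM c a *v x = cross7 x b + inner c x *\<^sub>R a - inner a x *\<^sub>R c"
      using psi_formula xca by simp
    have z: "PsiM b c *v x = cross7 x a + inner b x *\<^sub>R c - inner c x *\<^sub>R b"
      using psi_formula xbc by simp
    have i1: "inner b (cross7 x b) = 0" "inner a (cross7 x a) = 0"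
      using inner_cross_r inner_commute by metis+
    have i2: "inner c (cross7 x b) = inner x a" "inner c (cross7 x a) = - inner x b"
      by (simp_all add: inner_commute[of c] inner_cross_cyc xbc xca xba)
    have t1: "PsiM b c *v (PsiM c a *v x) = cross7 (cross7 x b) a - inner a x *\<^sub>R b"
      unfolding y psi_formula xbc xca
      by (simp add: cross_add_left cross_diff_left cross_scale_left cross_self xca inner_add_right
          inner_diff_right i1 i2 aa bb cc ab bc ca ba inner_commute[of x a])
    have t2: "PsiM c a *v (PsiM b c *v x) = cross7 (cross7 x a) b - inner b x *\<^sub>R a"
      unfolding z psi_formula xca xbc
      by (simp add: cross_add_left cross_diff_left cross_scale_left cross_self xba inner_add_right
          inner_diff_right i1 i2 aa bb cc ab bc ca ba inner_commute[of x b])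
    show ?thesis
      apply (unfold lie_bracket_def matrix_vector_mult_diff_rdistrib matrix_vector_mul_assoc[symmetric])
      apply (unfold t1 t2 scaleR_matrix_vector_assoc[symmetric])
      apply (unfold psi_formula)
      apply (simp add: assoc7' xab xba ab ba cross_neg_right inner_commute[of x] algebra_simps)
      by (simp add: vec_eq_iff)
  qed
  then show ?thesis by (simp add: matrix_eq)
qed

definition E1 :: "real^3^3" where
  "E1 = (\<chi> i j. if i = 3 \<and> j = 2 then 1 else if i = 2 \<and> j = 3 then -1 else 0)"
definition E2 :: "real^3^3" where
  "E2 = (\<chi> i j. if i = 1 \<and> j = 3 then 1 else if i = 3 \<and> j = 1 then -1 else 0)"
definition E3 :: "real^3^3" where
  "E3 = (\<chi> i j. if i = 2 \<and> j = 1 then 1 else if i = 1 \<and> j = 2 then -1 else 0)"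
lemma E_brackets: "lie_bracket E1 E2 = E3" "lie_bracket E2 E3 = E1" "lie_bracket E3 E1 = E2"
  by (simp_all add: lie_bracket_def E1_def E2_def E3_def vec_eq_iff forall_3 matrix_matrix_mult_def sum_3)

lemma E_entries: "(x1 *\<^sub>R E1 + x2 *\<^sub>R E2 + x3 *\<^sub>R E3) $ 3 $ 2 = x1"
  "(x1 *\<^sub>R E1 + x2 *\<^sub>R E2 + x3 *\<^sub>R E3) $ 1 $ 3 = x2"
  "(x1 *\<^sub>R E1 + x2 *\<^sub>R E2 + x3 *\<^sub>R E3) $ 2 $ 1 = x3"
  by (simp_all add: E1_def E2_def E3_def)

lemma E_comb_eq:
  assumes "x1 *\<^sub>R E1 + x2 *\<^sub>R E2 + x3 *\<^sub>R E3 = y1 *\<^sub>R E1 + y2 *\<^sub>R E2 + y3 *\<^sub>R E3"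
  shows "x1 = y1 \<and> x2 = y2 \<and> x3 = y3"
  using E_entries[of x1 x2 x3] E_entries[of y1 y2 y3] assms by metis

lemma so3_decomp:
  assumes "transpose M = - (M::real^3^3)"
  shows "M = (M$3$2) *\<^sub>R E1 + (M$1$3) *\<^sub>R E2 + (M$2$1) *\<^sub>R E3"
proof -
  have h: "M $ i $ j = - M $ j $ i" for i j
  proof -
    have "transpose M $ j $ i = (- M) $ j $ i" using assms by simp
    then show ?thesis by (simp add: transpose_def)
  qed
  have d: "M $ 1 $ 1 = 0" "M $ 2 $ 2 = 0" "M $ 3 $ 3 = 0"
    using h[of 1 1] h[of 2 2] h[of 3 3] by linarith+
  have o: "M $ 2 $ 3 = - M $ 3 $ 2" "M $ 3 $ 1 = - M $ 1 $ 3" "M $ 1 $ 2 = - M $ 2 $ 1"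
    using h by blast+
  show ?thesis
    unfolding vec_eq_iff forall_3
    using d o by (simp add: E1_def E2_def E3_def)
qed
lemma E_comb_skew: "transpose (x1 *\<^sub>R E1 + x2 *\<^sub>R E2 + x3 *\<^sub>R E3) = - (x1 *\<^sub>R E1 + x2 *\<^sub>R E2 + x3 *\<^sub>R E3)"
  unfolding vec_eq_iff forall_3 by (simp add: transpose_def E1_def E2_def E3_def)
lemma span3_rep:
  assumes "A \<in> span {X, Y, Z}"
  shows "\<exists>x1 x2 x3. A = x1 *\<^sub>R X + x2 *\<^sub>R Y + x3 *\<^sub>R Z"
proof -
  obtain k1 where "A - k1 *\<^sub>R X \<in> span {Y, Z}" using assms span_insert[of X "{Y,Z}"] by auto
  then obtain k2 where "A - k1 *\<^sub>R X - k2 *\<^sub>R Y \<in> span {Z}" using span_insert[of Y "{Z}"] by auto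
  then obtain k3 where "A - k1 *\<^sub>R X - k2 *\<^sub>R Y = k3 *\<^sub>R Z" using span_singleton[of Z] by auto
  then have "A = k1 *\<^sub>R X + k2 *\<^sub>R Y + k3 *\<^sub>R Z" by (simp add: algebra_simps)
  then show ?thesis by blast
qed

lemma span3_mem: "x1 *\<^sub>R X + x2 *\<^sub>R Y + x3 *\<^sub>R Z \<in> span {X, Y, Z}"
  by (intro span_add span_scale span_base) auto

lemma indep3:
  fixes X Y Z :: "'a::real_vector"
  assumes h: "\<And>x1 x2 x3. x1 *\<^sub>R X + x2 *\<^sub>R Y + x3 *\<^sub>R Z = 0 \<Longrightarrow> x1 = 0 \<and> x2 = 0 \<and> x3 = 0"
  shows "independent {X, Y, Z} \<and> card {X, Y, Z} = 3"
proof -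
  have XY: "X \<noteq> Y" using h[of 1 "-1" 0] by auto
  have XZ: "X \<noteq> Z" using h[of 1 0 "-1"] by auto
  have YZ: "Y \<noteq> Z" using h[of 0 1 "-1"] by auto
  have Z0: "Z \<noteq> 0" using h[of 0 0 1] by auto
  have Ysp: "Y \<notin> span {Z}"
  proof
    assume "Y \<in> span {Z}"
    then obtain k where "Y = k *\<^sub>R Z" using span_singleton[of Z] by auto
    then show False using h[of 0 1 "-k"] by auto
  qed
  have Xsp: "X \<notin> span {Y, Z}"
  proof
    assume "X \<in> span {Y, Z}"
    then obtain k where "X - k *\<^sub>R Y \<in> span {Z}" using span_insert[of Y "{Z}"] by auto
    then obtain k' where "X - k *\<^sub>R Y = k' *\<^sub>R Z" using span_singleton[of Z] by auto
    then have "1 *\<^sub>R X + (-k) *\<^sub>R Y + (-k') *\<^sub>R Z = 0" by (simp add: algebra_simps)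
    then show False using h[of 1 "-k" "-k'"] by simp
  qed
  have "independent {Z}" using Z0 by (simp add: independent_insert)
  then have "independent {Y, Z}" using Ysp YZ by (simp add: independent_insert)
  then have "independent {X, Y, Z}" using Xsp XY XZ by (simp add: independent_insert)
  moreover have "card {X, Y, Z} = 3" using XY XZ YZ by simp
  ultimately show ?thesis by blast
qed

lemma transpose_add': "transpose (A + B) = transpose A + transpose (B::real^'n^'m)"
  by (simp add: vec_eq_iff transpose_def)

theorem proposition4p5:
  fixes P :: "(real^7) set"
  assumes "associative_plane P"
  defines "S \<equiv> span {PsiM u v | u v. u \<in> P \<and> v \<in> P}"
  shows "dim S = 3
     \<and> S \<subseteq> (so_mat :: (real^7^7) set)
     \<and> (\<forall>A\<in>S. \<forall>B\<in>S. lie_bracket A B \<in> S)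
     \<and> (\<exists>f :: real^7^7 \<Rightarrow> real^3^3. linear f \<and> bij_betw f S (so_mat :: (real^3^3) set)
          \<and> (\<forall>A\<in>S. \<forall>B\<in>S. f (lie_bracket A B) = lie_bracket (f A) (f B)))"
proof -
  have sP: "subspace P" and dP: "dim P = 3" and clP: "\<And>u v. u \<in> P \<Longrightarrow> v \<in> P \<Longrightarrow> cross7 u v \<in> P"
    using assms(1) unfolding associative_plane_def by auto
  obtain B where BP: "B \<subseteq> P" and Bo: "pairwise orthogonal B" and Bn: "\<And>x. x \<in> B \<Longrightarrow> norm x = 1"
     and Bc: "card B = dim P"
    using orthonormal_basis_subspace[OF sP] by metis
  then obtain a b c0 where B: "B = {a,b,c0}" "a \<noteq> b"
    using dP card_3_iff by metis
  have aP: "a \<in> P" and bP: "b \<in> P" using BP B by auto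
  have aa: "inner a a = 1" using Bn[of a] B power2_norm_eq_inner[of a] by simp
  have bb: "inner b b = 1" using Bn[of b] B power2_norm_eq_inner[of b] by simp
  have ab: "inner a b = 0" using Bo B unfolding pairwise_def orthogonal_def by auto
  define c where "c = cross7 a b"
  have cP: "c \<in> P" using clP aP bP c_def by simp
  have ca: "inner c a = 0" and cb: "inner c b = 0"
    unfolding c_def by (simp_all add: inner_cross_l inner_cross_r)
  have cc: "inner c c = 1" unfolding c_def lagr using aa bb ab by simp
  have ba: "inner b a = 0" using ab by (simp add: inner_commute)
  have xba: "cross7 b a = - c" using c_def cross_skew by metis
  have xbc: "cross7 b c = a"
  proof -
    have "cross7 b (cross7 a b) + cross7 (cross7 b a) b = 2 *\<^sub>R a"
      using assoc7[of b a b] bb ab ba by simp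
    moreover have "cross7 (cross7 b a) b = cross7 b c"
      using xba cross_neg_left cross_skew by metis
    ultimately have "cross7 b c + cross7 b c = 2 *\<^sub>R a" unfolding c_def by metis
    then have "2 *\<^sub>R cross7 b c = 2 *\<^sub>R a" by (simp only: scaleR_2)
    then show ?thesis using scaleR_cancel_left[of 2 "cross7 b c" a] by simp
  qed
  have xca: "cross7 c a = b"
  proof -
    have "cross7 a (cross7 b a) + cross7 (cross7 a b) a = 2 *\<^sub>R b"
      using assoc7[of a b a] aa ab ba by simp
    moreover have "cross7 a (cross7 b a) = cross7 c a"
      using xba cross_neg_right cross_skew by metis
    ultimately have "cross7 c a + cross7 c a = 2 *\<^sub>R b" unfolding c_def by metis
    then have "2 *\<^sub>R cross7 c a = 2 *\<^sub>R b" by (simp only: scaleR_2)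
    then show ?thesis using scaleR_cancel_left[of 2 "cross7 c a" b] by simp
  qed
  have bc: "inner b c = 0" and ac: "inner a c = 0" using ca cb by (simp_all add: inner_commute)
  have indabc: "independent {a, b, c}"
  proof (rule pairwise_orthogonal_independent)
    show "pairwise orthogonal {a, b, c}"
      unfolding pairwise_def orthogonal_def using ab ba bc cb ac ca by auto
    show "0 \<notin> {a, b, c}" using aa bb cc by auto
  qed
  have cardabc: "card {a, b, c} = 3"
  proof -
    have "a \<noteq> b" "a \<noteq> c" "b \<noteq> c" using aa bb cc ab ac bc by auto
    then show ?thesis by simp
  qed
  have PS: "P = span {a, b, c}"
  proof
    show "P \<subseteq> span {a, b, c}"
      using card_ge_dim_independent[of "{a,b,c}" P] indabc cardabc dP aP bP cP by auto
    show "span {a, b, c} \<subseteq> P"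
      using span_minimal[of "{a,b,c}" P] sP aP bP cP by auto
  qed
  define B1 where "B1 = PsiM b c"
  define B2 where "B2 = PsiM c a"
  define B3 where "B3 = PsiM a b"
  have br12: "lie_bracket B1 B2 = 2 *\<^sub>R B3"
    unfolding B1_def B2_def B3_def
    by (rule bracket_rel) (use aa bb cc ab bc ca c_def xbc xca in auto)
  have br23: "lie_bracket B2 B3 = 2 *\<^sub>R B1"
    unfolding B1_def B2_def B3_def
    by (rule bracket_rel) (use aa bb cc ab bc ca c_def xbc xca in auto)
  have br31: "lie_bracket B3 B1 = 2 *\<^sub>R B2"
    unfolding B1_def B2_def B3_def
    by (rule bracket_rel) (use aa bb cc ab bc ca ac c_def xbc xca in auto)
  define T where "T = span {B1, B2, B3}"
  have sT: "subspace T" unfolding T_def by (rule subspace_span)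
  have base: "PsiM w v \<in> T" if "w \<in> {a,b,c}" "v \<in> {a,b,c}" for w v
  proof -
    have B1T: "B1 \<in> T" and B2T: "B2 \<in> T" and B3T: "B3 \<in> T"
      unfolding T_def by (simp_all add: span_base)
    then have "- B1 \<in> T" "- B2 \<in> T" "- B3 \<in> T" "0 \<in> T" unfolding T_def
      by (simp_all add: span_neg span_zero)
    then show ?thesis using that B1T B2T B3T
      unfolding B1_def B2_def B3_def
      by (auto simp: PsiM_self PsiM_skew[of b a] PsiM_skew[of c b] PsiM_skew[of a c])
  qed
  have inner_step: "PsiM w v \<in> T" if "w \<in> {a,b,c}" "v \<in> span {a,b,c}" for w v
  proof -
    have "subspace {v. PsiM w v \<in> T}"
      unfolding subspace_def
      using sT by (simp add: PsiM_zero_right PsiM_add_right PsiM_scale_right subspace_def)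
    then show ?thesis using span_induct[of v "{a,b,c}" "\<lambda>v. PsiM w v \<in> T"] that base by auto
  qed
  have GT: "PsiM u v \<in> T" if "u \<in> span {a,b,c}" "v \<in> span {a,b,c}" for u v
  proof -
    have "subspace {u. \<forall>v\<in>span {a,b,c}. PsiM u v \<in> T}"
      unfolding subspace_def
      using sT by (simp add: PsiM_zero_left PsiM_add_left PsiM_scale_left subspace_def)
    then show ?thesis
      using span_induct[of u "{a,b,c}" "\<lambda>u. \<forall>v\<in>span {a,b,c}. PsiM u v \<in> T"] that inner_step by auto
  qed
  have ST: "S = T"
  proof
    show "S \<subseteq> T" unfolding S_def
      by (rule span_minimal) (use GT PS sT in auto)
    show "T \<subseteq> S" unfolding S_def T_def
      by (rule span_mono) (use aP bP cP B1_def B2_def B3_def in auto)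
  qed
  obtain x where x0: "x \<noteq> 0" and xo: "\<And>y. y \<in> span P \<Longrightarrow> orthogonal x y"
    using orthogonal_to_subspace_exists[of P] dP by auto
  define z where "z = (1 / norm x) *\<^sub>R x"
  have "norm z = 1" unfolding z_def using x0 by simp
  then have zz: "inner z z = 1" using power2_norm_eq_inner[of z] by simp
  have zo: "inner z y = 0" if "y \<in> P" for y
    using xo[of y] that span_base[of y P] unfolding z_def orthogonal_def by simp
  have za: "inner z a = 0" "inner z b = 0" "inner z c = 0" "inner a z = 0" "inner b z = 0" "inner c z = 0"
    using zo aP bP cP by (simp_all add: inner_commute[of _ z])
  have B1z: "B1 *v z = cross7 z a" unfolding B1_def psi_formula xbc using za by simp
  have B2z: "B2 *v z = cross7 z b" unfolding B2_def psi_formula xca using za by simp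
  have B3z: "B3 *v z = cross7 z c" unfolding B3_def psi_formula c_def[symmetric] using za by simp
  define cf :: "real^7 \<Rightarrow> real^7^7 \<Rightarrow> real" where "cf w A = inner (A *v z) (cross7 z w)" for w A
  have cf_lin: "cf w (x1 *\<^sub>R B1 + x2 *\<^sub>R B2 + x3 *\<^sub>R B3) = x1 * cf w B1 + x2 * cf w B2 + x3 * cf w B3" for w x1 x2 x3
    unfolding cf_def
    by (simp add: matrix_vector_mult_add_rdistrib scaleR_matrix_vector_assoc[symmetric] inner_add_left)
  have cfv: "cf a B1 = 1" "cf a B2 = 0" "cf a B3 = 0"
            "cf b B1 = 0" "cf b B2 = 1" "cf b B3 = 0"
            "cf c B1 = 0" "cf c B2 = 0" "cf c B3 = 1"
    unfolding cf_def B1z B2z B3z lagr using zz za aa bb cc ab ba ac ca bc cb by simp_all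
  define f :: "real^7^7 \<Rightarrow> real^3^3" where
    "f A = (2 * cf a A) *\<^sub>R E1 + (2 * cf b A) *\<^sub>R E2 + (2 * cf c A) *\<^sub>R E3" for A
  have flin: "linear f"
  proof (rule linearI)
    fix A A' :: "real^7^7" and r :: real
    show "f (A + A') = f A + f A'"
      unfolding f_def cf_def by (simp add: matrix_vector_mult_add_rdistrib inner_add_left algebra_simps)
    show "f (r *\<^sub>R A) = r *\<^sub>R f A"
      unfolding f_def cf_def by (simp add: scaleR_matrix_vector_assoc[symmetric] algebra_simps)
  qed
  have fcomb: "f (x1 *\<^sub>R B1 + x2 *\<^sub>R B2 + x3 *\<^sub>R B3) = (2 * x1) *\<^sub>R E1 + (2 * x2) *\<^sub>R E2 + (2 * x3) *\<^sub>R E3"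
    for x1 x2 x3
    unfolding f_def cf_lin cfv by simp
  have ind: "independent {B1, B2, B3} \<and> card {B1, B2, B3} = 3"
  proof (rule indep3)
    fix x1 x2 x3 assume "x1 *\<^sub>R B1 + x2 *\<^sub>R B2 + x3 *\<^sub>R B3 = 0"
    then have "f (x1 *\<^sub>R B1 + x2 *\<^sub>R B2 + x3 *\<^sub>R B3) = f 0" by simp
    then have "(2 * x1) *\<^sub>R E1 + (2 * x2) *\<^sub>R E2 + (2 * x3) *\<^sub>R E3 = 0 *\<^sub>R E1 + 0 *\<^sub>R E2 + 0 *\<^sub>R E3"
      unfolding fcomb using linear_0[OF flin] by simp
    then show "x1 = 0 \<and> x2 = 0 \<and> x3 = 0" using E_comb_eq by fastforce
  qed
  have rep: "\<exists>x1 x2 x3. A = x1 *\<^sub>R B1 + x2 *\<^sub>R B2 + x3 *\<^sub>R B3" if "A \<in> S" for A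
    using span3_rep that ST T_def by auto
  have memS: "x1 *\<^sub>R B1 + x2 *\<^sub>R B2 + x3 *\<^sub>R B3 \<in> S" for x1 x2 x3
    using span3_mem ST T_def by auto
  have brcomb: "lie_bracket (x1 *\<^sub>R B1 + x2 *\<^sub>R B2 + x3 *\<^sub>R B3) (y1 *\<^sub>R B1 + y2 *\<^sub>R B2 + y3 *\<^sub>R B3)
      = (2 * (x2*y3 - x3*y2)) *\<^sub>R B1 + (2 * (x3*y1 - x1*y3)) *\<^sub>R B2 + (2 * (x1*y2 - x2*y1)) *\<^sub>R B3"
    for x1 x2 x3 y1 y2 y3
    unfolding lie_comb br12 br23 br31 by (simp add: algebra_simps)
  have Ebrcomb: "lie_bracket (x1 *\<^sub>R E1 + x2 *\<^sub>R E2 + x3 *\<^sub>R E3) (y1 *\<^sub>R E1 + y2 *\<^sub>R E2 + y3 *\<^sub>R E3)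
      = (x2*y3 - x3*y2) *\<^sub>R E1 + (x3*y1 - x1*y3) *\<^sub>R E2 + (x1*y2 - x2*y1) *\<^sub>R E3"
    for x1 x2 x3 y1 y2 y3
    unfolding lie_comb E_brackets by (simp add: algebra_simps)
  have part1: "dim S = 3"
    using ind dim_span_eq_card_independent ST T_def by metis
  have part2: "S \<subseteq> so_mat"
  proof
    fix A assume "A \<in> S"
    then obtain x1 x2 x3 where A: "A = x1 *\<^sub>R B1 + x2 *\<^sub>R B2 + x3 *\<^sub>R B3" using rep by blast
    show "A \<in> so_mat"
      unfolding so_mat_def A B1_def B2_def B3_def
      by (simp add: transpose_add' transpose_scalar PsiM_transpose)
  qed
  have part3: "\<forall>A\<in>S. \<forall>A'\<in>S. lie_bracket A A' \<in> S"
  proof (intro ballI)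
    fix A A' assume "A \<in> S" "A' \<in> S"
    then obtain x1 x2 x3 y1 y2 y3 where A: "A = x1 *\<^sub>R B1 + x2 *\<^sub>R B2 + x3 *\<^sub>R B3"
      and A': "A' = y1 *\<^sub>R B1 + y2 *\<^sub>R B2 + y3 *\<^sub>R B3" using rep by metis
    show "lie_bracket A A' \<in> S" unfolding A A' brcomb by (rule memS)
  qed
  have inj: "inj_on f S"
  proof
    fix A A' assume "A \<in> S" "A' \<in> S" and eq: "f A = f A'"
    then obtain x1 x2 x3 y1 y2 y3 where A: "A = x1 *\<^sub>R B1 + x2 *\<^sub>R B2 + x3 *\<^sub>R B3"
      and A': "A' = y1 *\<^sub>R B1 + y2 *\<^sub>R B2 + y3 *\<^sub>R B3" using rep by metis
    have "2 * x1 = 2 * y1 \<and> 2 * x2 = 2 * y2 \<and> 2 * x3 = 2 * y3"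
      using eq unfolding A A' fcomb by (rule E_comb_eq)
    then show "A = A'" unfolding A A' by simp
  qed
  have img: "f ` S = so_mat"
  proof
    show "f ` S \<subseteq> so_mat"
    proof
      fix M assume "M \<in> f ` S"
      then obtain A where "A \<in> S" "M = f A" by auto
      then obtain x1 x2 x3 where "M = f (x1 *\<^sub>R B1 + x2 *\<^sub>R B2 + x3 *\<^sub>R B3)" using rep by metis
      then show "M \<in> so_mat" unfolding so_mat_def fcomb using E_comb_skew by simp
    qed
    show "so_mat \<subseteq> f ` S"
    proof
      fix M :: "real^3^3" assume "M \<in> so_mat"
      then have "transpose M = - M" unfolding so_mat_def by simp
      then have M: "M = (M$3$2) *\<^sub>R E1 + (M$1$3) *\<^sub>R E2 + (M$2$1) *\<^sub>R E3" by (rule so3_decomp)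
      have "f ((M$3$2 / 2) *\<^sub>R B1 + (M$1$3 / 2) *\<^sub>R B2 + (M$2$1 / 2) *\<^sub>R B3) = M"
        unfolding fcomb using M by simp
      then show "M \<in> f ` S" using memS by (metis image_eqI)
    qed
  qed
  have hom: "\<forall>A\<in>S. \<forall>A'\<in>S. f (lie_bracket A A') = lie_bracket (f A) (f A')"
  proof (intro ballI)
    fix A A' assume "A \<in> S" "A' \<in> S"
    then obtain x1 x2 x3 y1 y2 y3 where A: "A = x1 *\<^sub>R B1 + x2 *\<^sub>R B2 + x3 *\<^sub>R B3"
      and A': "A' = y1 *\<^sub>R B1 + y2 *\<^sub>R B2 + y3 *\<^sub>R B3" using rep by metis
    show "f (lie_bracket A A') = lie_bracket (f A) (f A')"
      unfolding A A' brcomb fcomb Ebrcomb by (simp add: algebra_simps)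
  qed
  show ?thesis
    using part1 part2 part3 flin inj img hom unfolding bij_betw_def by blast
qed

end
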